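(* Let $n$ be a positive integer and $s$ a positive divisor of $n$. Let $D(n,s)$ be the set of positive divisors of $n$ that do not divide $s$, and let $M(n,s)$ be the square matrix with rows and columns indexed by $D(n,s)$ and $(d_1,d_2)$-entry $\gcd(d_1,d_2)-\gcd(d_1,d_2,s)$. Then $$\det M(n,s)=\prod_{d\in D(n,s)}\varphi(d),$$ where $\varphi$ is Euler's totient function. In particular, $M(n,s)$ is invertible.
   Context: The determinant of an empty matrix is taken to be $1$. *)

theory Defs
  imports "Jordan_Normal_Form.Determinant" "HOL-Number_Theory.Totient"
begin

definition Dset :: "nat \<Rightarrow> nat \<Rightarrow> nat set" where
  "Dset n s = {d. d dvd n \<and> 0 < d \<and> \<not> d dvd s}"

text \<open>M(n,s): square matrix indexed by D(n,s) (listed in increasing order;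
  the determinant does not depend on the chosen order since rows and columns
  are permuted simultaneously), entry gcd(d1,d2) - gcd(d1,d2,s), over the rationals.\<close>
definition Mmat :: "nat \<Rightarrow> nat \<Rightarrow> rat mat" where
  "Mmat n s = (let xs = sorted_list_of_set (Dset n s); k = length xs in
     mat k k (\<lambda>(i, j). of_nat (gcd (xs ! i) (xs ! j)) - of_nat (gcd (gcd (xs ! i) (xs ! j)) s)))"

end

theory Submission
  imports Defs
begin

lemma tot_sum:
  fixes g s :: nat
  assumes "0 < g"
  shows "(\<Sum>e | e dvd g \<and> \<not> e dvd s. totient e) = g - gcd g s"
proof -
  have fin: "finite {e. e dvd g}" using assms by simp
  have un: "{e. e dvd g} = {e. e dvd g \<and> e dvd s} \<union> {e. e dvd g \<and> \<not> e dvd s}" by blast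
  have "(\<Sum>e | e dvd g. totient e) = (\<Sum>e | e dvd g \<and> e dvd s. totient e) + (\<Sum>e | e dvd g \<and> \<not> e dvd s. totient e)"
    by (subst un, rule sum.union_disjoint) (use fin in auto)
  moreover have "{e. e dvd g \<and> e dvd s} = {e. e dvd gcd g s}" by auto
  then have "(\<Sum>e | e dvd g \<and> e dvd s. totient e) = gcd g s"
    using totient_divisor_sum[of "gcd g s"] by simp
  moreover have "(\<Sum>e | e dvd g. totient e) = g" by (rule totient_divisor_sum)
  ultimately have "g = gcd g s + (\<Sum>e | e dvd g \<and> \<not> e dvd s. totient e)"
    by linarith
  then show ?thesis by linarith
qed

theorem lemma4p5:
  fixes n s :: nat
  assumes "0 < n" and "0 < s" and "s dvd n"
  shows "det (Mmat n s) = (\<Prod>d\<in>Dset n s. of_nat (totient d))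
         \<and> invertible_mat (Mmat n s)"
proof -
  define D where "D = Dset n s"
  define xs where "xs = sorted_list_of_set D"
  define k where "k = length xs"
  have finD: "finite D" unfolding D_def Dset_def
    by (rule finite_subset[of _ "{d. d dvd n}"]) (use assms in auto)
  have setxs: "set xs = D" and dist: "distinct xs" using finD by (auto simp: xs_def)
  have sorted: "sorted_wrt (<) xs" unfolding xs_def by (rule strict_sorted_list_of_set)
  have inD: "xs ! i \<in> D" if "i < k" for i using that setxs k_def nth_mem by blast
  have pos: "0 < xs ! i" "xs ! i dvd n" "\<not> xs ! i dvd s" if "i < k" for i
    using inD[OF that] by (auto simp: D_def Dset_def)
  have lt: "xs ! i < xs ! j" if "i < j" "j < k" for i j
    using sorted that k_def sorted_wrt_nth_less by blast
  have ndvd: "\<not> xs ! j dvd xs ! i" if "i < j" "j < k" for i j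
  proof
    assume "xs ! j dvd xs ! i"
    then have "xs ! j \<le> xs ! i" using pos[of i] that by (intro dvd_imp_le) auto
    with lt[OF that] show False by simp
  qed
  have bij: "bij_betw ((!) xs) {0..<k} D"
    using bij_betw_nth[OF dist _ setxs[symmetric]] k_def by (simp add: atLeast0LessThan)
  have reidx: "(\<Sum>i\<in>{0..<k}. f (xs ! i)) = (\<Sum>d\<in>D. f d)" for f :: "nat \<Rightarrow> rat"
    using sum.reindex_bij_betw[OF bij, of f] .
  have reidxp: "(\<Prod>i\<in>{0..<k}. f (xs ! i)) = (\<Prod>d\<in>D. f d)" for f :: "nat \<Rightarrow> rat"
    using prod.reindex_bij_betw[OF bij, of f] .
  define Z :: "rat mat" where "Z = mat k k (\<lambda>(i,j). if xs ! j dvd xs ! i then 1 else 0)"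
  define Y :: "rat mat" where "Y = mat k k (\<lambda>(l,j). if xs ! l dvd xs ! j then of_nat (totient (xs ! l)) else 0)"
  have M: "Mmat n s = mat k k (\<lambda>(i, j). of_nat (gcd (xs ! i) (xs ! j)) - of_nat (gcd (gcd (xs ! i) (xs ! j)) s))"
    unfolding Mmat_def xs_def k_def D_def Let_def by simp
  have Zc: "Z \<in> carrier_mat k k" and Yc: "Y \<in> carrier_mat k k" by (auto simp: Z_def Y_def)
  have prodeq: "Mmat n s = Z * Y"
  proof (rule eq_matI)
    fix i j assume i: "i < dim_row (Z * Y)" and j: "j < dim_col (Z * Y)"
    then have i: "i < k" and j: "j < k" using Zc Yc by auto
    define g where "g = gcd (xs ! i) (xs ! j)"
    have gpos: "0 < g" using pos[OF i] by (simp add: g_def)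
    have "(Z * Y) $$ (i, j) = (\<Sum>l\<in>{0..<k}. Z $$ (i,l) * Y $$ (l,j))"
      using i j Zc Yc by (simp add: scalar_prod_def)
    also have "\<dots> = (\<Sum>l\<in>{0..<k}. (\<lambda>e. if e dvd xs ! i \<and> e dvd xs ! j then of_nat (totient e) else 0) (xs ! l))"
      by (rule sum.cong) (use i j in \<open>auto simp: Z_def Y_def\<close>)
    also have "\<dots> = (\<Sum>e\<in>D. if e dvd xs ! i \<and> e dvd xs ! j then of_nat (totient e) else 0)"
      by (rule reidx)
    also have "\<dots> = (\<Sum>e\<in>{e \<in> D. e dvd g}. of_nat (totient e))"
      by (simp add: sum.inter_filter[OF finD] g_def)
    also have "{e \<in> D. e dvd g} = {e. e dvd g \<and> \<not> e dvd s}"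
    proof -
      have "e dvd n" if "e dvd g" for e
      proof -
        have "g dvd xs ! i" by (simp add: g_def)
        then show ?thesis using that pos(2)[OF i] dvd_trans by blast
      qed
      moreover have "0 < e" if "e dvd g" for e using that gpos by (auto intro: Nat.gr0I)
      ultimately show ?thesis by (auto simp: D_def Dset_def)
    qed
    also have "(\<Sum>e\<in>{e. e dvd g \<and> \<not> e dvd s}. (of_nat (totient e) :: rat)) = of_nat (g - gcd g s)"
      by (simp only: of_nat_sum[symmetric] tot_sum[OF gpos])
    also have "\<dots> = of_nat g - of_nat (gcd g s)"
      by (rule of_nat_diff) (use gpos in \<open>simp add: gcd_le1_nat\<close>)
    finally show "Mmat n s $$ (i, j) = (Z * Y) $$ (i, j)"
      using i j by (simp add: M g_def)
  qed (use Zc Yc in \<open>auto simp: M\<close>)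
  have dZ: "det Z = 1"
  proof -
    have "det Z = prod_list (diag_mat Z)"
      by (rule det_lower_triangular[OF _ Zc]) (use ndvd in \<open>auto simp: Z_def\<close>)
    also have "\<dots> = 1" using Zc by (simp add: prod_list_diag_prod Z_def)
    finally show ?thesis .
  qed
  have dY: "det Y = (\<Prod>d\<in>D. of_nat (totient d))"
  proof -
    have "det Y = prod_list (diag_mat Y)"
      by (rule det_upper_triangular[OF _ Yc]) (use ndvd in \<open>auto simp: Y_def upper_triangular_def\<close>)
    also have "\<dots> = (\<Prod>i\<in>{0..<k}. of_nat (totient (xs ! i)))"
      using Yc by (simp add: prod_list_diag_prod Y_def)
    also have "\<dots> = (\<Prod>d\<in>D. of_nat (totient d))" by (rule reidxp)
    finally show ?thesis .
  qed
  have detM: "det (Mmat n s) = (\<Prod>d\<in>D. of_nat (totient d))"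
    unfolding prodeq det_mult[OF Zc Yc] dZ dY by simp
  have Mc: "Mmat n s \<in> carrier_mat k k" using prodeq Zc Yc by simp
  have nz: "det (Mmat n s) \<noteq> 0"
    unfolding detM using finD by (auto simp: D_def Dset_def)
  have "Mmat n s \<in> Units (ring_mat TYPE(rat) k ())"
    by (rule det_non_zero_imp_unit[OF Mc nz])
  then obtain B where B: "B \<in> carrier_mat k k" "Mmat n s * B = 1\<^sub>m k" "B * Mmat n s = 1\<^sub>m k"
    unfolding Units_def ring_mat_def by auto
  have "invertible_mat (Mmat n s)"
    unfolding invertible_mat_def inverts_mat_def using Mc B by (auto intro!: exI[of _ B])
  with detM show ?thesis by (simp add: D_def)
qed

end
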